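(* Let $\rho=(a,2t,b)$, i.e. $\rho(x,y)=ax^2+2txy+by^2$, be a positive definite binary quadratic form with $(2t)^2-4ab=-4\Omega C<0$, such that $2\parallel t$ and $\gcd(a,2t,b)=4$. Assume that $C=2$ or $C$ is twice an odd prime, that $\Omega>0$ is even, and let $\Delta>0$ be an odd integer with $\gcd(C,\Delta)=1$ such that the congruences $$R^2+\Delta a\equiv 0,\qquad RS-\Delta t\equiv 0,\qquad S^2+\Delta b\equiv 0 \pmod C$$ are solvable in integers $R,S$. Then $\rho$ is properly represented by a positive definite properly primitive ternary quadratic form $f$ with invariants $\Omega$ and $\Delta$, and the reciprocal $F$ of $f$ is improperly primitive.
   Context: A ternary quadratic form is $f(x,y,z)=a_{11}x^2+a_{22}y^2+a_{33}z^2+2a_{23}yz+2a_{13}xz+2a_{12}xy$ with $a_{ij}\in\mathbb{Z}$, with symmetric matrix $A=(a_{ij})$. Let $\tau=\gcd(a_{11},a_{22},a_{33},a_{23},a_{13},a_{12})$ and $\sigma=\gcd(a_{11},a_{22},a_{33},2a_{23},2a_{13},2a_{12})$. $f$ is primitive if $\tau=1$, properly primitive if $\sigma=\tau=1$, improperly primitive if $\tau=1,\sigma=2$. Let $A_{ij}$ be the $(i,j)$-cofactor of $A$, $\Omega=\gcd(A_{11},A_{22},A_{33},A_{23},A_{13},A_{12})$, and for primitive $f$ define $\Delta$ by $\det(A)=\Delta\Omega^2$; $\Omega,\Delta$ are the invariants of $f$. The reciprocal of $f$ is $F=\frac1\Omega\sum_{i,j}A_{ij}X_iX_j$. A binary form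 with matrix $B$ is represented by $f$ if there is an integer $3\times 2$ matrix $M$ with $M^{t}AM=B$, and properly represented if moreover the $2\times 2$ minors of $M$ are coprime. The binary form $(a,2t,b)$ has matrix $\begin{pmatrix}a&t\\t&b\end{pmatrix}$. *)

theory Defs
  imports Complex_Main "HOL-Computational_Algebra.Primes" "HOL-Number_Theory.Cong"
begin

text \<open>A ternary quadratic form
  f = a11 x^2 + a22 y^2 + a33 z^2 + 2 a23 yz + 2 a13 xz + 2 a12 xy,
  given by its six integer coefficients.\<close>

record tern =
  c11 :: int
  c22 :: int
  c33 :: int
  c23 :: int
  c13 :: int
  c12 :: int

definition tmat :: "tern \<Rightarrow> nat \<Rightarrow> nat \<Rightarrow> int" where
  "tmat f i j =
     (if i = 0 \<and> j = 0 then c11 f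
      else if i = 1 \<and> j = 1 then c22 f
      else if i = 2 \<and> j = 2 then c33 f
      else if {i, j} = {1, 2} then c23 f
      else if {i, j} = {0, 2} then c13 f
      else if {i, j} = {0, 1} then c12 f
      else 0)"

definition tval :: "tern \<Rightarrow> real \<Rightarrow> real \<Rightarrow> real \<Rightarrow> real" where
  "tval f (x::real) (y::real) (z::real) = of_int (c11 f) * x^2 + of_int (c22 f) * y^2 + of_int (c33 f) * z^2
      + 2 * of_int (c23 f) * y * z + 2 * of_int (c13 f) * x * z + 2 * of_int (c12 f) * x * y"

definition tern_pos_def :: "tern \<Rightarrow> bool" where
  "tern_pos_def f \<longleftrightarrow> (\<forall>x y z. (x, y, z) \<noteq> (0, 0, 0) \<longrightarrow> tval f x y z > 0)"

definition tau :: "tern \<Rightarrow> int" where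
  "tau f = Gcd {c11 f, c22 f, c33 f, c23 f, c13 f, c12 f}"

definition sigma :: "tern \<Rightarrow> int" where
  "sigma f = Gcd {c11 f, c22 f, c33 f, 2 * c23 f, 2 * c13 f, 2 * c12 f}"

definition primitive :: "tern \<Rightarrow> bool" where
  "primitive f \<longleftrightarrow> tau f = 1"

definition properly_primitive :: "tern \<Rightarrow> bool" where
  "properly_primitive f \<longleftrightarrow> sigma f = 1 \<and> tau f = 1"

definition improperly_primitive :: "tern \<Rightarrow> bool" where
  "improperly_primitive f \<longleftrightarrow> tau f = 1 \<and> sigma f = 2"

definition tdet :: "tern \<Rightarrow> int" where
  "tdet f = c11 f * c22 f * c33 f + 2 * c23 f * c13 f * c12 f
     - c11 f * (c23 f)^2 - c22 f * (c13 f)^2 - c33 f * (c12 f)^2"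

text \<open>Cofactors A_ij of the symmetric matrix A (A_ij = (-1)^(i+j) times the minor).\<close>
definition cof11 :: "tern \<Rightarrow> int" where "cof11 f = c22 f * c33 f - (c23 f)^2"
definition cof22 :: "tern \<Rightarrow> int" where "cof22 f = c11 f * c33 f - (c13 f)^2"
definition cof33 :: "tern \<Rightarrow> int" where "cof33 f = c11 f * c22 f - (c12 f)^2"
definition cof23 :: "tern \<Rightarrow> int" where "cof23 f = c12 f * c13 f - c11 f * c23 f"
definition cof13 :: "tern \<Rightarrow> int" where "cof13 f = c12 f * c23 f - c13 f * c22 f"
definition cof12 :: "tern \<Rightarrow> int" where "cof12 f = c13 f * c23 f - c12 f * c33 f"

definition inv_Omega :: "tern \<Rightarrow> int" where
  "inv_Omega f = Gcd {cof11 f, cof22 f, cof33 f, cof23 f, cof13 f, cof12 f}"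

text \<open>The invariant Delta is given by det A = Delta * Omega^2; stated directly in the theorem.\<close>

definition reciprocal :: "tern \<Rightarrow> tern" where
  "reciprocal f = \<lparr> c11 = cof11 f div inv_Omega f, c22 = cof22 f div inv_Omega f,
     c33 = cof33 f div inv_Omega f, c23 = cof23 f div inv_Omega f,
     c13 = cof13 f div inv_Omega f, c12 = cof12 f div inv_Omega f \<rparr>"

definition tbil :: "tern \<Rightarrow> (nat \<Rightarrow> int) \<Rightarrow> (nat \<Rightarrow> int) \<Rightarrow> int" where
  "tbil f u v = (\<Sum>i<3. \<Sum>j<3. u i * tmat f i j * v j)"

text \<open>f represents the binary form with matrix [[a,t],[t,b]] via the 3x2 integer
  matrix M with columns u and v: M^t A M = B.\<close>
definition represents_by :: "tern \<Rightarrow> (nat \<Rightarrow> int) \<Rightarrow> (nat \<Rightarrow> int) \<Rightarrow> int \<Rightarrow> int \<Rightarrow> int \<Rightarrow> bool" where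
  "represents_by f u v a t b \<longleftrightarrow>
     tbil f u u = a \<and> tbil f u v = t \<and> tbil f v u = t \<and> tbil f v v = b"

definition properly_represents :: "tern \<Rightarrow> int \<Rightarrow> int \<Rightarrow> int \<Rightarrow> bool" where
  "properly_represents f a t b \<longleftrightarrow>
     (\<exists>u v. represents_by f u v a t b \<and>
        Gcd {u 0 * v 1 - u 1 * v 0, u 0 * v 2 - u 2 * v 0, u 1 * v 2 - u 2 * v 1} = 1)"

definition bin_pos_def :: "int \<Rightarrow> int \<Rightarrow> int \<Rightarrow> bool" where
  "bin_pos_def a t b \<longleftrightarrow>
     (\<forall>x y :: real. (x, y) \<noteq> (0, 0) \<longrightarrow> of_int a * x^2 + 2 * of_int t * x * y + of_int b * y^2 > 0)"

end

theory Submission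
  imports Defs
begin

lemma Gcd6_eqI:
  fixes k x1 x2 x3 x4 x5 x6 :: int
  assumes "k \<ge> 0" "k dvd x1" "k dvd x2" "k dvd x3" "k dvd x4" "k dvd x5" "k dvd x6"
    and "\<And>d. d dvd x1 \<Longrightarrow> d dvd x2 \<Longrightarrow> d dvd x3 \<Longrightarrow> d dvd x4 \<Longrightarrow> d dvd x5 \<Longrightarrow> d dvd x6 \<Longrightarrow> d dvd k"
  shows "Gcd {x1, x2, x3, x4, x5, x6} = k"
proof -
  let ?A = "{x1, x2, x3, x4, x5, x6}"
  have h: "Gcd ?A dvd x" if "x \<in> ?A" for x using that by (rule Gcd_dvd)
  have "Gcd ?A dvd k" using assms(8) h by simp
  moreover have "k dvd Gcd ?A" using assms(2-7) by (intro Gcd_greatest) auto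
  ultimately show ?thesis using assms(1) Gcd_int_greater_eq_0 zdvd_antisym_nonneg by blast
qed

lemma odd_dvd4: fixes d g :: int assumes "d dvd 4" "d dvd g" "odd g" shows "d dvd 1"
proof -
  have "coprime 4 g" using assms(3) by (metis coprime_mult_left_iff coprime_left_2_iff_odd mult_2 numeral_Bit0)
  hence "gcd 4 g = 1" by (simp add: coprime_iff_gcd_eq_1)
  thus ?thesis using gcd_greatest[OF assms(1) assms(2)] by simp
qed

lemma odd_dvd2: fixes d g :: int assumes "d dvd 2" "d dvd g" "odd g" shows "d dvd 1"
proof -
  have "coprime 2 g" using assms(3) by (simp add: coprime_left_2_iff_odd)
  hence "gcd 2 g = 1" by (simp add: coprime_iff_gcd_eq_1)
  thus ?thesis using gcd_greatest[OF assms(1) assms(2)] by simp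
qed

lemma dvd2_lemma: fixes d g :: int assumes "d dvd 8" "d dvd 2*g" "odd g" shows "d dvd 2"
proof -
  have "gcd (2*4) (2*g) = 2 * gcd 4 g" using gcd_mult_left[of 2 4 g] by simp
  moreover have "coprime 4 g" using assms(3) by (metis coprime_mult_left_iff coprime_left_2_iff_odd mult_2 numeral_Bit0)
  ultimately have "gcd 8 (2*g) = 2" by (simp add: coprime_iff_gcd_eq_1)
  thus ?thesis using gcd_greatest[OF assms(1) assms(2)] by simp
qed

theorem mainTheorem2:
  fixes a t b Omega C Delta :: int
  assumes rho_pd: "bin_pos_def a t b"
    and disc: "(2 * t)^2 - 4 * a * b = - 4 * Omega * C"
    and disc_neg: "- 4 * Omega * C < 0"
    and t_exact: "2 dvd t" "\<not> 4 dvd t"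
    and gcd4: "gcd a (gcd (2 * t) b) = 4"
    and C_form: "C = 2 \<or> (\<exists>p::int. prime p \<and> odd p \<and> C = 2 * p)"
    and Omega_pos: "Omega > 0" and Omega_even: "even Omega"
    and Delta_pos: "Delta > 0" and Delta_odd: "odd Delta"
    and coprime_C_Delta: "gcd C Delta = 1"
    and solvable: "\<exists>R S :: int. [R^2 + Delta * a = 0] (mod C) \<and>
                      [R * S - Delta * t = 0] (mod C) \<and>
                      [S^2 + Delta * b = 0] (mod C)"
  shows "\<exists>f. tern_pos_def f \<and> properly_primitive f \<and>
             inv_Omega f = Omega \<and> tdet f = Delta * Omega^2 \<and>
             properly_represents f a t b \<and>
             improperly_primitive (reciprocal f)"
proof -
  obtain R S where RS: "C dvd R^2 + Delta * a" "C dvd R * S - Delta * t" "C dvd S^2 + Delta * b"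
    using solvable by (auto simp: cong_0_iff)
  have disc': "a * b - t^2 = Omega * C" using disc by (simp add: algebra_simps power2_eq_square)
  have Cpos: "C > 0" using disc_neg Omega_pos by (simp add: zero_less_mult_iff)
  obtain \<gamma> where gam: "C = 2 * \<gamma>" "odd \<gamma>" using C_form by auto
  have a4: "4 dvd a" using gcd4 by (metis gcd_dvd1)
  have b4: "4 dvd b" using gcd4 by (metis gcd_dvd2 dvd_trans)
  obtain a' where a': "a = 4 * a'" using a4 by blast
  obtain b' where b': "b = 4 * b'" using b4 by blast
  obtain t' where t'0: "t = 2 * t'" using t_exact by blast
  have t': "t = 2 * t'" "odd t'" using t'0 t_exact(2) by auto
  have Reven: "even R"
  proof -
    have "2 dvd R^2 + Delta * a" using RS(1) gam(1) by (metis dvd_mult_left)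
    thus ?thesis using a' by auto
  qed
  have Seven: "even S"
  proof -
    have "2 dvd S^2 + Delta * b" using RS(3) gam(1) by (metis dvd_mult_left)
    thus ?thesis using b' by auto
  qed
  obtain R' where R': "R = 2 * R'" using Reven by blast
  obtain S' where S': "S = 2 * S'" using Seven by blast
  obtain g22 where g22: "R^2 + Delta * a = C * g22" using RS(1) by blast
  obtain g12 where g12: "R * S - Delta * t = C * g12" using RS(2) by blast
  obtain g11 where g11: "S^2 + Delta * b = C * g11" using RS(3) by blast
  have g22e: "even g22"
  proof -
    have "2 * (\<gamma> * g22) = 2 * (2 * R'^2 + 2 * Delta * a')" using g22 R' a' gam(1)
      by (simp add: algebra_simps power2_eq_square)
    hence "\<gamma> * g22 = 2 * (R'^2 + Delta * a')" by simp
    thus ?thesis using gam(2) by (metis even_mult_iff dvd_triv_left)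
  qed
  have g11e: "even g11"
  proof -
    have "2 * (\<gamma> * g11) = 2 * (2 * S'^2 + 2 * Delta * b')" using g11 S' b' gam(1)
      by (simp add: algebra_simps power2_eq_square)
    hence "\<gamma> * g11 = 2 * (S'^2 + Delta * b')" by simp
    thus ?thesis using gam(2) by (metis even_mult_iff dvd_triv_left)
  qed
  have g12o: "odd g12"
  proof -
    have "2 * (\<gamma> * g12) = 2 * (2 * R' * S' - Delta * t')" using g12 R' S' t' gam(1)
      by (simp add: algebra_simps)
    hence "\<gamma> * g12 = 2 * R' * S' - Delta * t'" by simp
    moreover have "odd (2 * R' * S' - Delta * t')" using Delta_odd t'(2) by simp
    ultimately show ?thesis by (metis even_mult_iff)
  qed
  have copC: "coprime C Delta" using coprime_C_Delta by (simp add: coprime_iff_gcd_eq_1)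
  have copD: "coprime Delta d" if "d dvd C" for d
    using copC that by (meson coprime_commute coprime_divisors dvd_refl)
  define K13 where "K13 = g12 * R - g22 * S"
  define K23 where "K23 = g12 * S - g11 * R"
  define K33 where "K33 = g11 * g22 - g12^2"
  have "C * K13 = Delta * (-(t * R + a * S))" unfolding K13_def
  proof -
    have "C * (g12 * R - g22 * S) = (C * g12) * R - (C * g22) * S" by algebra
    also have "\<dots> = (R * S - Delta * t) * R - (R^2 + Delta * a) * S" using g12 g22 by simp
    also have "\<dots> = Delta * (-(t * R + a * S))" by algebra
    finally show "C * (g12 * R - g22 * S) = Delta * (-(t * R + a * S))" .
  qed
  hence "Delta dvd K13" using copC by (metis coprime_commute coprime_dvd_mult_right_iff dvd_triv_left)
  then obtain r where r: "Delta * r = K13" by (metis dvd_def)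
  have "C * K23 = Delta * (-(t * S + b * R))" unfolding K23_def
  proof -
    have "C * (g12 * S - g11 * R) = (C * g12) * S - (C * g11) * R" by algebra
    also have "\<dots> = (R * S - Delta * t) * S - (S^2 + Delta * b) * R" using g12 g11 by simp
    also have "\<dots> = Delta * (-(t * S + b * R))" by algebra
    finally show "C * (g12 * S - g11 * R) = Delta * (-(t * S + b * R))" .
  qed
  hence "Delta dvd K23" using copC by (metis coprime_commute coprime_dvd_mult_right_iff dvd_triv_left)
  then obtain s where s: "Delta * s = K23" by (metis dvd_def)
  have "(C*C) * K33 = Delta * (Delta * (a*b - t^2) + (b * R^2 + a * S^2 + 2 * t * R * S))" unfolding K33_def
  proof -
    have "(C*C) * (g11 * g22 - g12^2) = (C * g11) * (C * g22) - (C * g12)^2" by algebra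
    also have "\<dots> = (S^2 + Delta * b) * (R^2 + Delta * a) - (R * S - Delta * t)^2" using g11 g12 g22 by simp
    also have "\<dots> = Delta * (Delta * (a*b - t^2) + (b * R^2 + a * S^2 + 2 * t * R * S))" by algebra
    finally show "(C*C) * (g11 * g22 - g12^2) = Delta * (Delta * (a*b - t^2) + (b * R^2 + a * S^2 + 2 * t * R * S))" .
  qed
  moreover have "coprime Delta (C*C)" using copC by (simp add: coprime_commute)
  ultimately have "Delta dvd K33" by (metis coprime_dvd_mult_right_iff dvd_triv_left)
  then obtain c where c: "Delta * c = K33" by (metis dvd_def)
  have E1: "Delta * a = C * g22 - R^2" using g22 by simp
  have E2: "Delta * b = C * g11 - S^2" using g11 by simp
  have E3: "Delta * t = R * S - C * g12" using g12 by simp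
  have E4: "Delta * r = g12 * R - g22 * S" using r K13_def by simp
  have E5: "Delta * s = g12 * S - g11 * R" using s K23_def by simp
  have E6: "Delta * c = g11 * g22 - g12^2" using c K33_def by simp
  define dG where "dG = g11 * (g22 * C - R^2) - g12 * (g12 * C - R * S) + S * (g12 * R - g22 * S)"
  have Dnz: "Delta \<noteq> 0" using Delta_pos by simp
  have E7: "Delta^2 * Omega = dG"
  proof -
    have "C * (Delta^2 * Omega) = Delta^2 * (a * b - t^2)" using disc' by (simp add: algebra_simps)
    also have "\<dots> = (Delta * a) * (Delta * b) - (Delta * t)^2" by algebra
    also have "\<dots> = C * dG" unfolding E1 E2 E3 dG_def by algebra
    finally show ?thesis using Cpos by simp
  qed
  define f where "f = \<lparr> c11 = a, c22 = b, c33 = c, c23 = s, c13 = r, c12 = t \<rparr>"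
  have cancel: "x = y" if "Delta^2 * x = Delta^2 * y" for x y :: int using that Dnz by simp
  have F11: "cof11 f = Omega * g11"
  proof (rule cancel)
    have "Delta^2 * cof11 f = (Delta * b) * (Delta * c) - (Delta * s)^2" by (simp add: f_def cof11_def algebra_simps power2_eq_square)
    also have "\<dots> = dG * g11" unfolding E2 E5 E6 dG_def by algebra
    finally show "Delta^2 * cof11 f = Delta^2 * (Omega * g11)" using E7 by (simp add: algebra_simps)
  qed
  have F22: "cof22 f = Omega * g22"
  proof (rule cancel)
    have "Delta^2 * cof22 f = (Delta * a) * (Delta * c) - (Delta * r)^2" by (simp add: f_def cof22_def algebra_simps power2_eq_square)
    also have "\<dots> = dG * g22" unfolding E1 E4 E6 dG_def by algebra
    finally show "Delta^2 * cof22 f = Delta^2 * (Omega * g22)" using E7 by (simp add: algebra_simps)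
  qed
  have F33: "cof33 f = Omega * C" using disc' by (simp add: f_def cof33_def)
  have F23: "cof23 f = Omega * R"
  proof (rule cancel)
    have "Delta^2 * cof23 f = (Delta * t) * (Delta * r) - (Delta * a) * (Delta * s)" by (simp add: f_def cof23_def algebra_simps power2_eq_square)
    also have "\<dots> = dG * R" unfolding E1 E3 E4 E5 dG_def by algebra
    finally show "Delta^2 * cof23 f = Delta^2 * (Omega * R)" using E7 by (simp add: algebra_simps)
  qed
  have F13: "cof13 f = Omega * S"
  proof (rule cancel)
    have "Delta^2 * cof13 f = (Delta * t) * (Delta * s) - (Delta * r) * (Delta * b)" by (simp add: f_def cof13_def algebra_simps power2_eq_square)
    also have "\<dots> = dG * S" unfolding E2 E3 E4 E5 dG_def by algebra
    finally show "Delta^2 * cof13 f = Delta^2 * (Omega * S)" using E7 by (simp add: algebra_simps)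
  qed
  have F12: "cof12 f = Omega * g12"
  proof (rule cancel)
    have "Delta^2 * cof12 f = (Delta * r) * (Delta * s) - (Delta * t) * (Delta * c)" by (simp add: f_def cof12_def algebra_simps power2_eq_square)
    also have "\<dots> = dG * g12" unfolding E3 E4 E5 E6 dG_def by algebra
    finally show "Delta^2 * cof12 f = Delta^2 * (Omega * g12)" using E7 by (simp add: algebra_simps)
  qed
  have Ddet: "tdet f = Delta * Omega^2"
  proof -
    have "Delta^3 * tdet f = (Delta*a)*(Delta*b)*(Delta*c) + 2*(Delta*s)*(Delta*r)*(Delta*t)
         - (Delta*a)*(Delta*s)^2 - (Delta*b)*(Delta*r)^2 - (Delta*c)*(Delta*t)^2"
      by (simp add: f_def tdet_def algebra_simps power2_eq_square power3_eq_cube)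
    also have "\<dots> = dG^2" unfolding E1 E2 E3 E4 E5 E6 dG_def by algebra
    also have "\<dots> = Delta^3 * (Delta * Omega^2)" unfolding E7[symmetric] by algebra
    finally show ?thesis using Dnz by simp
  qed
  \<comment> \<open>common divisors of G divide 4 after cancelling Delta\<close>
  have Gdiv: "d dvd 2*a \<and> d dvd 2*b \<and> d dvd 2*t" if "d dvd g11" "d dvd g22" "d dvd C" "d dvd 2*R" "d dvd 2*S" "d dvd 2*g12" for d
  proof -
    have cd: "coprime Delta d" using copD that(3) .
    have "Delta * (2*a) = g22 * (2 * C) - (2*R) * R" using E1 by (simp add: algebra_simps power2_eq_square)
    hence "d dvd Delta * (2*a)" using that by simp
    hence 1: "d dvd 2*a" using cd by (metis coprime_commute coprime_dvd_mult_right_iff)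
    have "Delta * (2*b) = g11 * (2 * C) - (2*S) * S" using E2 by (simp add: algebra_simps power2_eq_square)
    hence "d dvd Delta * (2*b)" using that by simp
    hence 2: "d dvd 2*b" using cd by (metis coprime_commute coprime_dvd_mult_right_iff)
    have "Delta * (2*t) = (2*R) * S - C * (2 * g12)" using E3 by (simp add: algebra_simps)
    hence "d dvd Delta * (2*t)" using that by simp
    hence 3: "d dvd 2*t" using cd by (metis coprime_commute coprime_dvd_mult_right_iff)
    show ?thesis using 1 2 3 by simp
  qed
  have gcd4': "d dvd 4" if "d dvd a" "d dvd 2*t" "d dvd b" for d
    using that gcd4 by (metis gcd_greatest)
  have tauG: "Gcd {g11, g22, C, R, S, g12} = 1"
  proof (rule Gcd6_eqI)
    fix d assume h: "d dvd g11" "d dvd g22" "d dvd C" "d dvd R" "d dvd S" "d dvd g12"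
    have "d dvd 2*a \<and> d dvd 2*b \<and> d dvd 2*t" using Gdiv h by simp
    hence "d dvd 8"
    proof -
      assume h2: "d dvd 2*a \<and> d dvd 2*b \<and> d dvd 2*t"
      hence "d dvd 2*(2*t)" using dvd_mult by blast
      hence "d dvd gcd (2*a) (gcd (2*(2*t)) (2*b))" using h2 by (simp add: gcd_greatest)
      also have "gcd (2*a) (gcd (2*(2*t)) (2*b)) = 2 * gcd a (gcd (2*t) b)" using gcd_mult_left[of 2 "2*t" b] gcd_mult_left[of 2 a "gcd (2*t) b"] by simp
      finally show ?thesis using gcd4 by simp
    qed
    hence "d dvd 2" using dvd2_lemma h(6) g12o by (meson dvd_mult)
    thus "d dvd 1" using odd_dvd2 h(6) g12o by blast
  qed auto
  have sigG: "Gcd {g11, g22, C, 2*R, 2*S, 2*g12} = 2"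
  proof (rule Gcd6_eqI)
    fix d assume h: "d dvd g11" "d dvd g22" "d dvd C" "d dvd 2*R" "d dvd 2*S" "d dvd 2*g12"
    have h2: "d dvd 2*a \<and> d dvd 2*b \<and> d dvd 2*t" using Gdiv h by simp
    hence "d dvd 2*(2*t)" using dvd_mult by blast
    hence "d dvd gcd (2*a) (gcd (2*(2*t)) (2*b))" using h2 by (simp add: gcd_greatest)
    also have "gcd (2*a) (gcd (2*(2*t)) (2*b)) = 2 * gcd a (gcd (2*t) b)" using gcd_mult_left[of 2 "2*t" b] gcd_mult_left[of 2 a "gcd (2*t) b"] by simp
    finally have "d dvd 8" using gcd4 by simp
    thus "d dvd 2" using dvd2_lemma h(6) g12o by blast
  qed (use g11e g22e gam(1) in auto)
  have codd: "odd c"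
  proof
    assume "even c"
    hence "even (Delta * c)" by simp
    moreover have "odd (g11 * g22 - g12^2)" using g11e g12o by simp
    ultimately show False using E6 by simp
  qed
  have Om: "inv_Omega f = Omega"
  proof -
    have "inv_Omega f = Gcd ((*) Omega ` {g11, g22, C, R, S, g12})"
      unfolding inv_Omega_def F11 F22 F33 F23 F13 F12 by simp
    also have "\<dots> = normalize (Omega * Gcd {g11, g22, C, R, S, g12})" by (rule Gcd_mult)
    also have "\<dots> = Omega" using tauG Omega_pos by simp
    finally show ?thesis .
  qed
  have Onz: "Omega \<noteq> 0" using Omega_pos by simp
  have recf: "reciprocal f = \<lparr> c11 = g11, c22 = g22, c33 = C, c23 = R, c13 = S, c12 = g12 \<rparr>"
    unfolding reciprocal_def Om F11 F22 F33 F23 F13 F12 using Onz by simp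
  have impr: "improperly_primitive (reciprocal f)"
    unfolding improperly_primitive_def recf tau_def sigma_def using tauG sigG by simp
  have sigf0: "sigma f = Gcd {a,b,c,2*s,2*r,2*t}" unfolding sigma_def f_def by simp
  have sigf: "sigma f = 1" unfolding sigf0
  proof (rule Gcd6_eqI)
    fix d assume h: "d dvd a" "d dvd b" "d dvd c" "d dvd 2*s" "d dvd 2*r" "d dvd 2*t"
    have "d dvd 4" using gcd4' h by blast
    thus "d dvd 1" using odd_dvd4 h(3) codd by blast
  qed auto
  have tauf0: "tau f = Gcd {a,b,c,s,r,t}" unfolding tau_def f_def by simp
  have tauf: "tau f = 1" unfolding tauf0
  proof (rule Gcd6_eqI)
    fix d assume h: "d dvd a" "d dvd b" "d dvd c" "d dvd s" "d dvd r" "d dvd t"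
    have "d dvd 2*t" using h(6) by simp
    hence "d dvd 4" using gcd4' h by blast
    thus "d dvd 1" using odd_dvd4 h(3) codd by blast
  qed auto
  have pp: "properly_primitive f" unfolding properly_primitive_def using sigf tauf by simp
  define u :: "nat \<Rightarrow> int" where "u = (\<lambda>i. if i = 0 then 1 else 0)"
  define v :: "nat \<Rightarrow> int" where "v = (\<lambda>i. if i = 1 then 1 else 0)"
  have lt3: "{..<3::nat} = {0,1,2}" by auto
  have repr: "properly_represents f a t b"
    unfolding properly_represents_def
  proof (intro exI conjI)
    show "represents_by f u v a t b"
      unfolding represents_by_def tbil_def lt3 u_def v_def by (simp add: tmat_def f_def doubleton_eq_iff)
    show "Gcd {u 0 * v 1 - u 1 * v 0, u 0 * v 2 - u 2 * v 0, u 1 * v 2 - u 2 * v 1} = 1"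
      unfolding u_def v_def by simp
  qed
  have apos: "a > 0"
  proof -
    have "of_int a * 1^2 + 2 * of_int t * 1 * 0 + of_int b * 0^2 > (0::real)"
      using rho_pd unfolding bin_pos_def_def by (metis Pair_inject zero_neq_one)
    thus ?thesis by simp
  qed
  have pd: "tern_pos_def f"
    unfolding tern_pos_def_def
  proof (intro allI impI)
    fix x y z :: real assume nz: "(x, y, z) \<noteq> (0, 0, 0)"
    let ?a = "real_of_int a" and ?b = "real_of_int b" and ?c = "real_of_int c" and ?t = "real_of_int t"
      and ?r = "real_of_int r" and ?s = "real_of_int s" and ?C = "real_of_int C" and ?R = "real_of_int R"
      and ?O = "real_of_int Omega" and ?D = "real_of_int Delta" and ?g = "real_of_int g22"
    have h1: "?a * ?b - ?t^2 = ?O * ?C" using disc' by (metis of_int_diff of_int_mult of_int_power)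
    have h2: "?t * ?r - ?a * ?s = ?O * ?R" using F23 unfolding cof23_def f_def by (simp, metis of_int_diff of_int_mult)
    have h3: "?a * ?c - ?r^2 = ?O * ?g" using F22 unfolding cof22_def f_def by (simp, metis of_int_diff of_int_mult of_int_power)
    have h4: "?C * ?g - ?R^2 = ?D * ?a" using E1 by (metis of_int_diff of_int_mult of_int_power)
    let ?Q = "tval f x y z"
    have Qe: "?Q = ?a * x^2 + ?b * y^2 + ?c * z^2 + 2 * ?s * y * z + 2 * ?r * x * z + 2 * ?t * x * y"
      by (simp add: tval_def f_def)
    have key: "?a * ?C * ?Q = ?C * (?a*x + ?t*y + ?r*z)^2 + ?O * (?C*y - ?R*z)^2 + ?O * ?D * ?a * z^2"
      unfolding Qe using h1 h2 h3 h4 by algebra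
    show "?Q > 0"
    proof (rule ccontr)
      assume "\<not> ?Q > 0"
      hence "?a * ?C * ?Q \<le> 0" using apos Cpos by (simp add: mult_nonneg_nonpos)
      hence "?C * (?a*x + ?t*y + ?r*z)^2 + ?O * (?C*y - ?R*z)^2 + ?O * ?D * ?a * z^2 \<le> 0" using key by simp
      moreover have "?C * (?a*x + ?t*y + ?r*z)^2 \<ge> 0" using Cpos by simp
      moreover have "?O * (?C*y - ?R*z)^2 \<ge> 0" using Omega_pos by simp
      moreover have "?O * ?D * ?a * z^2 \<ge> 0" using Omega_pos Delta_pos apos by simp
      ultimately have z1: "?C * (?a*x + ?t*y + ?r*z)^2 = 0" "?O * (?C*y - ?R*z)^2 = 0" "?O * ?D * ?a * z^2 = 0"
        by linarith+
      have z: "z = 0" using z1(3) Omega_pos Delta_pos apos by simp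
      have y: "y = 0" using z1(2) z Omega_pos Cpos by simp
      have x: "x = 0" using z1(1) z y Cpos apos by simp
      show False using nz x y z by simp
    qed
  qed
  show ?thesis using pd pp Om Ddet repr impr by blast
qed

end
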